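(* Let $\Omega\subset\mathbb{C}$ be a simply connected open set with conformal coordinate $z=x+iy$, let $N:\Omega\to\mathbb{S}^2$ be a smooth harmonic map and let $f:\Omega\to\mathbb{R}^3$ satisfy $f_x=N\times N_y$, $f_y=-N\times N_x$. Let $p\in\Omega$ with $\operatorname{rank}(dN)_p\neq0$. Then, on a neighbourhood of $p$, $f$ is a parallel surface of a regular surface of constant mean curvature, i.e. there are a neighbourhood $U$ of $p$, a regular (immersed) surface $g:U\to\mathbb{R}^3$ with unit normal $N$ and constant mean curvature, and a constant $t$ such that $f=g+tN$ on $U$.
   Context: A smooth map $N:\Omega\to\mathbb{S}^2$ is harmonic iff $N\times(N_{xx}+N_{yy})=0$; the map $f$ (unique up to translation) is called the spherical frontal associated to $N$. A parallel of a surface $g$ with unit normal $N$ is a map of the form $g+tN$, $t\in\mathbb{R}$ constant. *)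

theory Defs
  imports "HOL-Analysis.Analysis"
begin

definition pdx :: "(complex \<Rightarrow> real^3) \<Rightarrow> complex \<Rightarrow> real^3" where
  "pdx F = (\<lambda>z. frechet_derivative F (at z) 1)"

definition pdy :: "(complex \<Rightarrow> real^3) \<Rightarrow> complex \<Rightarrow> real^3" where
  "pdy F = (\<lambda>z. frechet_derivative F (at z) \<i>)"

fun ipd :: "bool list \<Rightarrow> (complex \<Rightarrow> real^3) \<Rightarrow> complex \<Rightarrow> real^3" where
  "ipd [] F = F"
| "ipd (b # bs) F = (if b then pdx (ipd bs F) else pdy (ipd bs F))"

definition smooth_map_on :: "complex set \<Rightarrow> (complex \<Rightarrow> real^3) \<Rightarrow> bool" where
  "smooth_map_on S F \<longleftrightarrow> (\<forall>bs. \<forall>z\<in>S. ipd bs F differentiable (at z))"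

definition harmonic_sphere_map :: "complex set \<Rightarrow> (complex \<Rightarrow> real^3) \<Rightarrow> bool" where
  "harmonic_sphere_map S N \<longleftrightarrow>
     (\<forall>z\<in>S. norm (N z) = 1 \<and> cross3 (N z) (pdx (pdx N) z + pdy (pdy N) z) = 0)"

definition regular_surface_on :: "complex set \<Rightarrow> (complex \<Rightarrow> real^3) \<Rightarrow> bool" where
  "regular_surface_on S g \<longleftrightarrow> smooth_map_on S g \<and> (\<forall>z\<in>S. cross3 (pdx g z) (pdy g z) \<noteq> 0)"

definition unit_normal_on :: "complex set \<Rightarrow> (complex \<Rightarrow> real^3) \<Rightarrow> (complex \<Rightarrow> real^3) \<Rightarrow> bool" where
  "unit_normal_on S g N \<longleftrightarrow>
     (\<forall>z\<in>S. norm (N z) = 1 \<and> N z \<bullet> pdx g z = 0 \<and> N z \<bullet> pdy g z = 0)"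

definition mean_curvature :: "(complex \<Rightarrow> real^3) \<Rightarrow> (complex \<Rightarrow> real^3) \<Rightarrow> complex \<Rightarrow> real" where
  "mean_curvature g N z =
     (let gx = pdx g z; gy = pdy g z;
          E = gx \<bullet> gx; F = gx \<bullet> gy; G = gy \<bullet> gy;
          l = N z \<bullet> pdx (pdx g) z; m = N z \<bullet> pdx (pdy g) z; n = N z \<bullet> pdy (pdy g) z
      in (l * G - 2 * m * F + n * E) / (2 * (E * G - F\<^sup>2)))"

end

theory Submission
  imports Defs
begin

lemma bb_cross: "bounded_bilinear (cross3 :: real^3 \<Rightarrow> real^3 \<Rightarrow> real^3)"
  using bilinear_conv_bounded_bilinear bilinear_cross by blast

lemma has_derivative_cross3:
  assumes "(F has_derivative F') (at z)" "(G has_derivative G') (at z)"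
  shows "((\<lambda>w. cross3 (F w) (G w)) has_derivative (\<lambda>h. cross3 (F z) (G' h) + cross3 (F' h) (G z))) (at z)"
  using bounded_bilinear.FDERIV[OF bb_cross assms] by simp

lemma fd_local:
  assumes "open S" "z \<in> S" "\<And>w. w \<in> S \<Longrightarrow> F w = G w"
  shows "frechet_derivative F (at z) = frechet_derivative G (at z)"
proof -
  have "\<And>L. (F has_derivative L) (at z) \<longleftrightarrow> (G has_derivative L) (at z)"
    using has_derivative_transform_within_open[OF _ assms(1,2)] assms(3) by metis
  then show ?thesis unfolding frechet_derivative_def by simp
qed

lemma pd_local:
  assumes "open S" "z \<in> S" "\<And>w. w \<in> S \<Longrightarrow> F w = G w"
  shows "pdx F z = pdx G z" "pdy F z = pdy G z"
  unfolding pdx_def pdy_def using fd_local[OF assms] by auto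

lemma diff_local:
  assumes "open S" "z \<in> S" "\<And>w. w \<in> S \<Longrightarrow> F w = G w" "F differentiable (at z)"
  shows "G differentiable (at z)"
  using assms has_derivative_transform_within_open unfolding differentiable_def by metis

lemma pd_deriv:
  assumes "F differentiable (at z)"
  shows "(F has_derivative (\<lambda>h. Re h *\<^sub>R pdx F z + Im h *\<^sub>R pdy F z)) (at z)"
proof -
  let ?L = "frechet_derivative F (at z)"
  have d: "(F has_derivative ?L) (at z)" using assms frechet_derivative_works by blast
  have lin: "linear ?L" using assms linear_frechet_derivative by blast
  have "?L h = Re h *\<^sub>R pdx F z + Im h *\<^sub>R pdy F z" for h
  proof -
    have "h = Re h *\<^sub>R 1 + Im h *\<^sub>R \<i>" by (simp add: complex_eq_iff)
    then have "?L h = ?L (Re h *\<^sub>R 1 + Im h *\<^sub>R \<i>)" by simp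
    also have "\<dots> = Re h *\<^sub>R ?L 1 + Im h *\<^sub>R ?L \<i>" using lin by (simp add: linear_add linear_scale)
    finally show ?thesis unfolding pdx_def pdy_def by simp
  qed
  then have e: "?L = (\<lambda>h. Re h *\<^sub>R pdx F z + Im h *\<^sub>R pdy F z)" by (rule ext)
  show ?thesis using d unfolding e .
qed

lemma pd_of_deriv:
  assumes "(F has_derivative L) (at z)"
  shows "pdx F z = L 1" "pdy F z = L \<i>"
  using frechet_derivative_at[OF assms] unfolding pdx_def pdy_def by auto

definition sm :: "nat \<Rightarrow> complex set \<Rightarrow> (complex \<Rightarrow> real^3) \<Rightarrow> bool" where
  "sm n S F \<longleftrightarrow> (\<forall>bs. length bs \<le> n \<longrightarrow> (\<forall>z\<in>S. ipd bs F differentiable (at z)))"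

lemma ipd_snoc: "ipd (bs @ [b]) F = ipd bs (if b then pdx F else pdy F)"
  by (induction bs) auto

lemma ipd_local:
  assumes "open S" "\<And>w. w \<in> S \<Longrightarrow> F w = G w" "z \<in> S"
  shows "ipd bs F z = ipd bs G z"
  using assms(3)
proof (induction bs arbitrary: z)
  case Nil then show ?case using assms by simp
next
  case (Cons b bs)
  have "\<And>w. w \<in> S \<Longrightarrow> ipd bs F w = ipd bs G w" by (rule Cons.IH)
  then show ?case using pd_local[OF assms(1) Cons.prems, of "ipd bs F" "ipd bs G"] by simp
qed

lemma sm_local:
  assumes "open S" "\<And>w. w \<in> S \<Longrightarrow> F w = G w" "sm n S F"
  shows "sm n S G"
  unfolding sm_def
proof (intro allI impI ballI)
  fix bs :: "bool list" and z assume "length bs \<le> n" "z \<in> S"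
  then have dd: "ipd bs F differentiable (at z)" using assms(3) unfolding sm_def by blast
  show "ipd bs G differentiable (at z)"
  proof (rule diff_local[OF assms(1) \<open>z\<in>S\<close> _ dd])
    show "\<And>w. w \<in> S \<Longrightarrow> ipd bs F w = ipd bs G w" by (rule ipd_local[OF assms(1,2)])
  qed
qed

lemma sm_0: "sm 0 S F \<longleftrightarrow> (\<forall>z\<in>S. F differentiable (at z))"
  unfolding sm_def by auto

lemma sm_Suc: "sm (Suc n) S F \<longleftrightarrow> (\<forall>z\<in>S. F differentiable (at z)) \<and> sm n S (pdx F) \<and> sm n S (pdy F)"
proof
  assume a: "sm (Suc n) S F"
  have a': "\<And>bs z. length bs \<le> Suc n \<Longrightarrow> z \<in> S \<Longrightarrow> ipd bs F differentiable (at z)"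
    using a unfolding sm_def by blast
  have 1: "\<forall>z\<in>S. F differentiable (at z)" using a'[of "[]"] by simp
  have "sm n S (pdx F)" unfolding sm_def
  proof (intro allI impI ballI)
    fix bs :: "bool list" and z assume "length bs \<le> n" "z \<in> S"
    then have "ipd (bs @ [True]) F differentiable (at z)" by (intro a') auto
    then show "ipd bs (pdx F) differentiable (at z)" by (simp add: ipd_snoc)
  qed
  moreover have "sm n S (pdy F)" unfolding sm_def
  proof (intro allI impI ballI)
    fix bs :: "bool list" and z assume "length bs \<le> n" "z \<in> S"
    then have "ipd (bs @ [False]) F differentiable (at z)" by (intro a') auto
    then show "ipd bs (pdy F) differentiable (at z)" by (simp add: ipd_snoc)
  qed
  ultimately show "(\<forall>z\<in>S. F differentiable (at z)) \<and> sm n S (pdx F) \<and> sm n S (pdy F)" using 1 by blast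
next
  assume a: "(\<forall>z\<in>S. F differentiable (at z)) \<and> sm n S (pdx F) \<and> sm n S (pdy F)"
  have ax: "\<And>bs z. length bs \<le> n \<Longrightarrow> z \<in> S \<Longrightarrow> ipd bs (pdx F) differentiable (at z)"
   and ay: "\<And>bs z. length bs \<le> n \<Longrightarrow> z \<in> S \<Longrightarrow> ipd bs (pdy F) differentiable (at z)"
    using a unfolding sm_def by blast+
  show "sm (Suc n) S F" unfolding sm_def
  proof (intro allI impI ballI)
    fix bs :: "bool list" and z assume l: "length bs \<le> Suc n" and z: "z \<in> S"
    show "ipd bs F differentiable (at z)"
    proof (cases bs rule: rev_cases)
      case Nil then show ?thesis using a z by simp
    next
      case (snoc bs' b)
      then have "length bs' \<le> n" using l by simp
      then show ?thesis using ax[OF _ z] ay[OF _ z] snoc by (cases b) (simp_all add: ipd_snoc)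
    qed
  qed
qed

lemma sm_mono: "sm n S F \<Longrightarrow> m \<le> n \<Longrightarrow> sm m S F"
  unfolding sm_def by auto

lemma smooth_sm: "smooth_map_on S F \<longleftrightarrow> (\<forall>n. sm n S F)"
  unfolding smooth_map_on_def sm_def by blast

lemma pd_add_scale:
  assumes "F differentiable (at z)" "G differentiable (at z)"
  shows "pdx (\<lambda>w. F w + c *\<^sub>R G w) z = pdx F z + c *\<^sub>R pdx G z"
    "pdy (\<lambda>w. F w + c *\<^sub>R G w) z = pdy F z + c *\<^sub>R pdy G z"
    "(\<lambda>w. F w + c *\<^sub>R G w) differentiable (at z)"
proof -
  have "((\<lambda>w. F w + c *\<^sub>R G w) has_derivative
     (\<lambda>h. (Re h *\<^sub>R pdx F z + Im h *\<^sub>R pdy F z) + c *\<^sub>R (Re h *\<^sub>R pdx G z + Im h *\<^sub>R pdy G z))) (at z)"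
    by (intro has_derivative_add has_derivative_scaleR_right pd_deriv assms)
  from pd_of_deriv[OF this] this show
    "pdx (\<lambda>w. F w + c *\<^sub>R G w) z = pdx F z + c *\<^sub>R pdx G z"
    "pdy (\<lambda>w. F w + c *\<^sub>R G w) z = pdy F z + c *\<^sub>R pdy G z"
    "(\<lambda>w. F w + c *\<^sub>R G w) differentiable (at z)" by (auto simp: differentiable_def)
qed

lemma pd_cross:
  assumes "F differentiable (at z)" "G differentiable (at z)"
  shows "pdx (\<lambda>w. cross3 (F w) (G w)) z = cross3 (F z) (pdx G z) + cross3 (pdx F z) (G z)"
    "pdy (\<lambda>w. cross3 (F w) (G w)) z = cross3 (F z) (pdy G z) + cross3 (pdy F z) (G z)"
    "(\<lambda>w. cross3 (F w) (G w)) differentiable (at z)"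
proof -
  note d = has_derivative_cross3[OF pd_deriv[OF assms(1)] pd_deriv[OF assms(2)]]
  from pd_of_deriv[OF d] d show
    "pdx (\<lambda>w. cross3 (F w) (G w)) z = cross3 (F z) (pdx G z) + cross3 (pdx F z) (G z)"
    "pdy (\<lambda>w. cross3 (F w) (G w)) z = cross3 (F z) (pdy G z) + cross3 (pdy F z) (G z)"
    "(\<lambda>w. cross3 (F w) (G w)) differentiable (at z)" by (auto simp: differentiable_def)
qed

lemma sm_add_scale:
  assumes "open S"
  shows "sm n S F \<Longrightarrow> sm n S G \<Longrightarrow> sm n S (\<lambda>w. F w + c *\<^sub>R G w)"
proof (induction n arbitrary: F G)
  case 0 then show ?case using pd_add_scale(3) by (simp add: sm_0)
next
  case (Suc n)
  have dF: "\<forall>z\<in>S. F differentiable (at z)" and dG: "\<forall>z\<in>S. G differentiable (at z)"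
    using Suc.prems sm_Suc by blast+
  have sF: "sm n S (pdx F)" "sm n S (pdy F)" using Suc.prems(1) unfolding sm_Suc by blast+
  have sG: "sm n S (pdx G)" "sm n S (pdy G)" using Suc.prems(2) unfolding sm_Suc by blast+
  have s1: "sm n S (\<lambda>w. pdx F w + c *\<^sub>R pdx G w)" "sm n S (\<lambda>w. pdy F w + c *\<^sub>R pdy G w)"
    by (intro Suc.IH sF sG)+
  have e1: "\<And>w. w \<in> S \<Longrightarrow> pdx F w + c *\<^sub>R pdx G w = pdx (\<lambda>w. F w + c *\<^sub>R G w) w"
    "\<And>w. w \<in> S \<Longrightarrow> pdy F w + c *\<^sub>R pdy G w = pdy (\<lambda>w. F w + c *\<^sub>R G w) w"
    using dF dG by (simp_all add: pd_add_scale)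
  have "sm n S (pdx (\<lambda>w. F w + c *\<^sub>R G w))" by (rule sm_local[OF assms e1(1) s1(1)])
  moreover have "sm n S (pdy (\<lambda>w. F w + c *\<^sub>R G w))" by (rule sm_local[OF assms e1(2) s1(2)])
  moreover have "\<forall>z\<in>S. (\<lambda>w. F w + c *\<^sub>R G w) differentiable (at z)"
    using dF dG by (auto intro!: pd_add_scale(3))
  ultimately show ?case unfolding sm_Suc by (intro conjI)
qed

lemma sm_cross:
  assumes "open S"
  shows "sm n S F \<Longrightarrow> sm n S G \<Longrightarrow> sm n S (\<lambda>w. cross3 (F w) (G w))"
proof (induction n arbitrary: F G)
  case 0 then show ?case using pd_cross(3) by (simp add: sm_0)
next
  case (Suc n)
  have dF: "\<forall>z\<in>S. F differentiable (at z)" and dG: "\<forall>z\<in>S. G differentiable (at z)"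
    using Suc.prems sm_Suc by blast+
  have sF: "sm n S F" "sm n S (pdx F)" "sm n S (pdy F)" using Suc.prems sm_Suc sm_mono le_SucI by blast+
  have sG: "sm n S G" "sm n S (pdx G)" "sm n S (pdy G)" using Suc.prems sm_Suc sm_mono le_SucI by blast+
  have s1: "sm n S (\<lambda>w. cross3 (F w) (pdx G w) + 1 *\<^sub>R cross3 (pdx F w) (G w))"
    "sm n S (\<lambda>w. cross3 (F w) (pdy G w) + 1 *\<^sub>R cross3 (pdy F w) (G w))"
    by (intro sm_add_scale[OF assms] Suc.IH sF sG)+
  have e1: "\<And>w. w \<in> S \<Longrightarrow> cross3 (F w) (pdx G w) + 1 *\<^sub>R cross3 (pdx F w) (G w) = pdx (\<lambda>w. cross3 (F w) (G w)) w"
    "\<And>w. w \<in> S \<Longrightarrow> cross3 (F w) (pdy G w) + 1 *\<^sub>R cross3 (pdy F w) (G w) = pdy (\<lambda>w. cross3 (F w) (G w)) w"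
    using dF dG by (simp_all add: pd_cross)
  have "sm n S (pdx (\<lambda>w. cross3 (F w) (G w)))" by (rule sm_local[OF assms e1(1) s1(1)])
  moreover have "sm n S (pdy (\<lambda>w. cross3 (F w) (G w)))" by (rule sm_local[OF assms e1(2) s1(2)])
  moreover have "\<forall>z\<in>S. (\<lambda>w. cross3 (F w) (G w)) differentiable (at z)"
    using dF dG by (auto intro!: pd_cross(3))
  ultimately show ?case unfolding sm_Suc by (intro conjI)
qed

lemma triple_swap: "(b::real^3) \<bullet> cross3 n a = - (a \<bullet> cross3 n b)"
  by (simp add: cross3_simps)

lemma alg:
  fixes n0 a b gx gy :: "real^3" and s :: real
  assumes s: "s * s = 1" and n: "n0 \<bullet> n0 = 1" "n0 \<bullet> a = 0" "n0 \<bullet> b = 0"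
    and gx: "gx = cross3 n0 b + s *\<^sub>R a" and gy: "gy = - cross3 n0 a + s *\<^sub>R b"
    and nz: "gx \<noteq> 0"
  shows "n0 \<bullet> gx = 0" "n0 \<bullet> gy = 0" "cross3 gx gy \<noteq> 0"
    "((-(a \<bullet> gx)) * (gy \<bullet> gy) - 2 * (-(a \<bullet> gy)) * (gx \<bullet> gy) + (-(b \<bullet> gy)) * (gx \<bullet> gx))
      / (2 * ((gx \<bullet> gx) * (gy \<bullet> gy) - (gx \<bullet> gy)\<^sup>2)) = - s / 2"
proof -
  show n1: "n0 \<bullet> gx = 0" using n by (simp add: gx inner_add_right dot_cross_self)
  show "n0 \<bullet> gy = 0" using n by (simp add: gy inner_add_right inner_diff_right dot_cross_self)
  have c1: "cross3 n0 gx = - b + s *\<^sub>R cross3 n0 a"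
    using n by (simp add: gx cross_add_right cross_mult_right Lagrange)
  have gy2: "gy = - s *\<^sub>R cross3 n0 gx"
    unfolding c1 gy using s by (simp add: algebra_simps)
  have F: "gx \<bullet> gy = 0" unfolding gy2 by (simp add: dot_cross_self)
  have nc: "(norm (cross3 n0 x))\<^sup>2 = x \<bullet> x" if "n0 \<bullet> x = 0" for x
    using norm_cross_dot[of n0 x] that n by (simp add: power2_norm_eq_inner power_mult_distrib)
  have G: "gy \<bullet> gy = gx \<bullet> gx"
    unfolding gy2 using nc[OF n1] s by (simp add: power2_norm_eq_inner algebra_simps)
  have cr: "cross3 gx gy = - (s * (gx \<bullet> gx)) *\<^sub>R n0"
    unfolding gy2 using n1 by (simp add: cross_mult_right Lagrange inner_commute)
  have E0: "gx \<bullet> gx \<noteq> 0" using nz by simp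
  have s0: "s \<noteq> 0" using s by auto
  show "cross3 gx gy \<noteq> 0" unfolding cr using E0 s0 n by auto
  define T where "T = a \<bullet> cross3 n0 b"
  have "(norm (cross3 n0 b))\<^sup>2 = b \<bullet> b" using nc n by simp
  then have E: "gx \<bullet> gx = b \<bullet> b + 2 * s * T + a \<bullet> a"
    unfolding gx T_def using s by (simp add: inner_add_left inner_add_right power2_norm_eq_inner inner_commute algebra_simps)
  have ln: "a \<bullet> gx + b \<bullet> gy = 2 * T + s * (a \<bullet> a + b \<bullet> b)"
    unfolding gx gy T_def by (simp add: inner_add_right triple_swap[of b n0 a] algebra_simps)
  have "-(a \<bullet> gx) + -(b \<bullet> gy) = -(2 * T + s * (a \<bullet> a + b \<bullet> b))" using ln by simp
  also have "\<dots> = -(s * (b \<bullet> b) + 2 * (s * s) * T + s * (a \<bullet> a))" unfolding s by (simp add: algebra_simps)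
  also have "\<dots> = - s * (gx \<bullet> gx)" unfolding E by (simp add: algebra_simps)
  finally have h: "-(a \<bullet> gx) + -(b \<bullet> gy) = - s * (gx \<bullet> gx)" .
  have num: "(-(a \<bullet> gx)) * (gy \<bullet> gy) - 2 * (-(a \<bullet> gy)) * (gx \<bullet> gy) + (-(b \<bullet> gy)) * (gx \<bullet> gx)
      = (-(a \<bullet> gx) + -(b \<bullet> gy)) * (gx \<bullet> gx)" unfolding F G by (simp add: algebra_simps)
  have den: "2 * ((gx \<bullet> gx) * (gy \<bullet> gy) - (gx \<bullet> gy)\<^sup>2) = 2 * (gx \<bullet> gx) * (gx \<bullet> gx)"
    unfolding F G by simp
  show "((-(a \<bullet> gx)) * (gy \<bullet> gy) - 2 * (-(a \<bullet> gy)) * (gx \<bullet> gy) + (-(b \<bullet> gy)) * (gx \<bullet> gx))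
      / (2 * ((gx \<bullet> gx) * (gy \<bullet> gy) - (gx \<bullet> gy)\<^sup>2)) = - s / 2"
    unfolding num den h using E0 by (simp add: field_simps)
qed

lemma pd_inner_const:
  assumes "open S" "z \<in> S" "\<And>w. w \<in> S \<Longrightarrow> F w \<bullet> G w = c"
    "F differentiable (at z)" "G differentiable (at z)"
  shows "pdx F z \<bullet> G z + F z \<bullet> pdx G z = 0" "pdy F z \<bullet> G z + F z \<bullet> pdy G z = 0"
proof -
  have d1: "((\<lambda>w. F w \<bullet> G w) has_derivative
     (\<lambda>h. F z \<bullet> (Re h *\<^sub>R pdx G z + Im h *\<^sub>R pdy G z) + (Re h *\<^sub>R pdx F z + Im h *\<^sub>R pdy F z) \<bullet> G z)) (at z)"
    by (rule has_derivative_inner[OF pd_deriv[OF assms(4)] pd_deriv[OF assms(5)]])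
  have "((\<lambda>w. c) has_derivative (\<lambda>h. 0)) (at z)" by simp
  then have d2: "((\<lambda>w. F w \<bullet> G w) has_derivative (\<lambda>h. 0)) (at z)"
    using has_derivative_transform_within_open[OF _ assms(1,2), of "\<lambda>w. c" "\<lambda>h. 0" UNIV "\<lambda>w. F w \<bullet> G w"] assms(3)
    by simp
  have e: "(\<lambda>h. F z \<bullet> (Re h *\<^sub>R pdx G z + Im h *\<^sub>R pdy G z) + (Re h *\<^sub>R pdx F z + Im h *\<^sub>R pdy F z) \<bullet> G z) = (\<lambda>h. 0)"
    using has_derivative_unique[OF d1 d2] .
  from fun_cong[OF e, of 1] show "pdx F z \<bullet> G z + F z \<bullet> pdx G z = 0"
    by (simp add: inner_commute)
  from fun_cong[OF e, of \<i>] show "pdy F z \<bullet> G z + F z \<bullet> pdy G z = 0"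
    by (simp add: inner_commute)
qed

lemma sm_subset: "sm n S F \<Longrightarrow> T \<subseteq> S \<Longrightarrow> sm n T F"
  unfolding sm_def by blast

lemma main_s:
  fixes \<Omega> :: "complex set" and N f :: "complex \<Rightarrow> real^3" and p :: complex and s :: real
  assumes om: "open \<Omega>"
    and smN: "smooth_map_on \<Omega> N" and hN: "harmonic_sphere_map \<Omega> N"
    and df: "\<forall>z\<in>\<Omega>. f differentiable (at z)"
    and fx: "\<forall>z\<in>\<Omega>. pdx f z = cross3 (N z) (pdy N z)"
    and fy: "\<forall>z\<in>\<Omega>. pdy f z = - cross3 (N z) (pdx N z)"
    and p: "p \<in> \<Omega>"
    and s: "s * s = 1"
    and gp: "cross3 (N p) (pdy N p) + s *\<^sub>R pdx N p \<noteq> 0"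
  shows "\<exists>U g t H. open U \<and> p \<in> U \<and> U \<subseteq> \<Omega> \<and>
           regular_surface_on U g \<and> unit_normal_on U g N \<and>
           (\<forall>z\<in>U. mean_curvature g N z = H) \<and>
           (\<forall>z\<in>U. f z = g z + t *\<^sub>R N z)"
proof -
  have sN: "\<And>n. sm n \<Omega> N" using smN smooth_sm by blast
  have dN: "\<And>z. z \<in> \<Omega> \<Longrightarrow> N differentiable (at z)" using sN[of 0] unfolding sm_0 by blast
  have sNx: "sm n \<Omega> (pdx N)" and sNy: "sm n \<Omega> (pdy N)" for n
    using sN[of "Suc n"] unfolding sm_Suc by blast+
  have dNx: "\<And>z. z \<in> \<Omega> \<Longrightarrow> pdx N differentiable (at z)"
    and dNy: "\<And>z. z \<in> \<Omega> \<Longrightarrow> pdy N differentiable (at z)"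
    using sNx[of 0] sNy[of 0] unfolding sm_0 by blast+
  have sf: "sm n \<Omega> f" for n
  proof (cases n)
    case 0 then show ?thesis using df sm_0 by blast
  next
    case (Suc m)
    have c1: "sm m \<Omega> (\<lambda>z. cross3 (N z) (pdy N z))" by (rule sm_cross[OF om sN sNy])
    have c2: "sm m \<Omega> (\<lambda>z. cross3 (pdx N z) (N z))" by (rule sm_cross[OF om sNx sN])
    have "sm m \<Omega> (pdx f)" by (rule sm_local[OF om _ c1]) (simp add: fx)
    moreover have "sm m \<Omega> (pdy f)" by (rule sm_local[OF om _ c2]) (metis fy cross_skew)
    ultimately show ?thesis unfolding Suc sm_Suc using df by blast
  qed
  define g where "g = (\<lambda>z. f z + s *\<^sub>R N z)"
  have sg: "\<And>n. sm n \<Omega> g" unfolding g_def by (rule sm_add_scale[OF om sf sN])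
  have dgx: "\<And>z. z \<in> \<Omega> \<Longrightarrow> pdx g differentiable (at z)"
    and dgy: "\<And>z. z \<in> \<Omega> \<Longrightarrow> pdy g differentiable (at z)"
    using sg[of "Suc 0"] unfolding sm_Suc sm_0 by blast+
  have dg: "\<And>z. z \<in> \<Omega> \<Longrightarrow> g differentiable (at z)" using sg[of 0] unfolding sm_0 by blast
  have gx: "pdx g z = cross3 (N z) (pdy N z) + s *\<^sub>R pdx N z" if "z \<in> \<Omega>" for z
    unfolding g_def using pd_add_scale(1)[OF df[rule_format, OF that] dN[OF that]] fx that by simp
  have gy: "pdy g z = - cross3 (N z) (pdx N z) + s *\<^sub>R pdy N z" if "z \<in> \<Omega>" for z
    unfolding g_def using pd_add_scale(2)[OF df[rule_format, OF that] dN[OF that]] fy that by simp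
  have nN: "N z \<bullet> N z = 1" if "z \<in> \<Omega>" for z
    using hN that unfolding harmonic_sphere_map_def by (simp add: dot_square_norm)
  have nNx: "N z \<bullet> pdx N z = 0" and nNy: "N z \<bullet> pdy N z = 0" if "z \<in> \<Omega>" for z
    using pd_inner_const[OF om that nN dN[OF that] dN[OF that]] by (simp_all add: inner_commute)
  have ng: "N z \<bullet> pdx g z = 0 \<and> N z \<bullet> pdy g z = 0" if "z \<in> \<Omega>" for z
    using alg(1,2)[OF s nN[OF that] nNx[OF that] nNy[OF that] gx[OF that] gy[OF that]]
    by (simp add: gx[OF that] gy[OF that] inner_add_right inner_diff_right dot_cross_self nNx[OF that] nNy[OF that])
  define U where "U = \<Omega> \<inter> pdx g -` (- {0})"
  have cont: "continuous_on \<Omega> (pdx g)"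
    using dgx by (meson continuous_at_imp_continuous_on differentiable_imp_continuous_within)
  have oU: "open U" unfolding U_def using continuous_open_preimage[OF cont om, of "- {0}"] by auto
  have pU: "p \<in> U" unfolding U_def using gx[OF p] gp p by simp
  have UO: "U \<subseteq> \<Omega>" unfolding U_def by auto
  have A: "cross3 (pdx g z) (pdy g z) \<noteq> 0 \<and> mean_curvature g N z = - s / 2" if "z \<in> U" for z
  proof -
    have zO: "z \<in> \<Omega>" and nz: "pdx g z \<noteq> 0" using that unfolding U_def by auto
    note al = alg[OF s nN[OF zO] nNx[OF zO] nNy[OF zO] gx[OF zO] gy[OF zO] nz]
    have l: "N z \<bullet> pdx (pdx g) z = - (pdx N z \<bullet> pdx g z)"
      using pd_inner_const(1)[OF om zO _ dN[OF zO] dgx[OF zO], of 0] ng by fastforce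
    have m: "N z \<bullet> pdx (pdy g) z = - (pdx N z \<bullet> pdy g z)"
      using pd_inner_const(1)[OF om zO _ dN[OF zO] dgy[OF zO], of 0] ng by fastforce
    have n: "N z \<bullet> pdy (pdy g) z = - (pdy N z \<bullet> pdy g z)"
      using pd_inner_const(2)[OF om zO _ dN[OF zO] dgy[OF zO], of 0] ng by fastforce
    show ?thesis using al(3,4) unfolding mean_curvature_def Let_def l m n by simp
  qed
  have reg: "regular_surface_on U g"
    unfolding regular_surface_on_def smooth_sm using A sg sm_subset[OF _ UO] by blast
  have un: "unit_normal_on U g N"
    unfolding unit_normal_on_def using ng UO hN unfolding harmonic_sphere_map_def by blast
  have fe: "\<forall>z\<in>U. f z = g z + (- s) *\<^sub>R N z" unfolding g_def by simp
  show ?thesis using oU pU UO reg un A fe by blast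
qed

theorem proposition2p2:
  fixes \<Omega> :: "complex set" and N f :: "complex \<Rightarrow> real^3" and p :: complex
  assumes "open \<Omega>" and "simply_connected \<Omega>"
    and "smooth_map_on \<Omega> N" and "harmonic_sphere_map \<Omega> N"
    and "\<forall>z\<in>\<Omega>. f differentiable (at z)"
    and "\<forall>z\<in>\<Omega>. pdx f z = cross3 (N z) (pdy N z)"
    and "\<forall>z\<in>\<Omega>. pdy f z = - cross3 (N z) (pdx N z)"
    and "p \<in> \<Omega>"
    and "pdx N p \<noteq> 0 \<or> pdy N p \<noteq> 0"
  shows "\<exists>U g t H. open U \<and> p \<in> U \<and> U \<subseteq> \<Omega> \<and>
           regular_surface_on U g \<and> unit_normal_on U g N \<and>
           (\<forall>z\<in>U. mean_curvature g N z = H) \<and>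
           (\<forall>z\<in>U. f z = g z + t *\<^sub>R N z)"
proof (cases "cross3 (N p) (pdy N p) + (-1) *\<^sub>R pdx N p = 0")
  case False
  show ?thesis by (rule main_s[OF assms(1,3-8), of "-1"]) (use False in auto)
next
  case True
  have "cross3 (N p) (pdy N p) + 1 *\<^sub>R pdx N p \<noteq> 0"
  proof
    assume h: "cross3 (N p) (pdy N p) + 1 *\<^sub>R pdx N p = 0"
    have "(2::real) *\<^sub>R pdx N p = (cross3 (N p) (pdy N p) + 1 *\<^sub>R pdx N p) - (cross3 (N p) (pdy N p) + (-1) *\<^sub>R pdx N p)"
      unfolding scaleR_2 by simp
    also have "\<dots> = 0" using h True by simp
    finally have x0: "pdx N p = 0" by simp
    then have c0: "cross3 (N p) (pdy N p) = 0" using h by simp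
    have n1: "N p \<bullet> N p = 1" using assms(4,8) unfolding harmonic_sphere_map_def by (simp add: dot_square_norm)
    have nN: "\<And>w. w \<in> \<Omega> \<Longrightarrow> N w \<bullet> N w = 1"
      using assms(4) unfolding harmonic_sphere_map_def by (simp add: dot_square_norm)
    have dNp: "N differentiable (at p)" using assms(3,8) unfolding smooth_map_on_def
      by (metis ipd.simps(1))
    have "N p \<bullet> pdy N p = 0"
      using pd_inner_const(2)[OF assms(1,8) nN dNp dNp] by (simp add: inner_commute)
    then have "cross3 (N p) (cross3 (N p) (pdy N p)) = - pdy N p" using n1 by (simp add: Lagrange)
    then have "pdy N p = 0" using c0 by simp
    then show False using x0 assms(9) by simp
  qed
  then show ?thesis by (intro main_s[OF assms(1,3-8), of 1]) simp_all
qed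

end
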